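(* For any constant $\varepsilon\in(0,\eta)$, let $c_\varepsilon=\min\{2\eta-2\varepsilon,1\}$. Then the set $E_{c_\varepsilon}=\{(x_1,\dots,x_n)\in[0,1]^n:\max_{i,j\in\mathcal V}|x_i-x_j|\ge c_\varepsilon\}$ is finite-time robustly reachable from $[0,1]^n$ under both control protocols (C1) and (C3).
   Context: Fix $n\ge3$, $\mathcal V=\{1,\dots,n\}$, confidence thresholds $r_i\in(0,1]$, belief factors $\omega_i\in(0,1)$, $\eta>0$. States $x(t)\in[0,1]^n$. Neighbor set $\mathcal N_i(t)=\{j:|x_j(t)-x_i(t)|\le r_i\}$ (contains $i$), $\Pi_{[0,1]}(y)=\min\{1,\max\{0,y\}\}$, $x_{\rm ave}(t)=\frac1n\sum_ix_i(t)$. Control protocol (C1): $x_i(t+1)=\Pi_{[0,1]}\big(|\mathcal N_i(t)|^{-1}\sum_{j\in\mathcal N_i(t)}x_j(t)+u_i(t)+b_i(t)\big)$. Control protocol (C3): $x_i(t+1)=\Pi_{[0,1]}\big(\omega_ix_{\rm ave}(t)+\frac{1-\omega_i}{|\mathcal N_i(t)|}\sum_{j\in\mathcal N_i(t)}x_j(t)+u_i(t)+b_i(t)\big)$. Here $\delta_i(t)\in(0,\eta)$ is a chosen parameter, $u_i(t)\in[-\eta+\delta_i(t),\eta-\delta_i(t)]$ a chosen control input, $b_i(t)\in[-\delta_i(t),\delta_i(t)]$ an arbitrary uncertainty; $\delta_i(t),u_i(t)$ may depend on $x(0),\dots,x(t)$. A set $S\subseteq[0,1]^n$ is finite-time robustly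 reachable from $[0,1]^n$ under a control protocol if there exist constants $T>0$ and $\varepsilon'\in(0,\eta)$, independent of $x(0)$, such that for every $x(0)\in[0,1]^n$, either $x(0)\in S$, or one can choose $\delta_i(t)\in[\varepsilon',\eta)$ and $u_i(t)\in[-\eta+\delta_i(t),\eta-\delta_i(t)]$ for $i\in\mathcal V$, $0\le t<T$, guaranteeing that for arbitrary $b_i(t)\in[-\delta_i(t),\delta_i(t)]$ there is $t\in[1,T]$ with $x(t)\in S$. *)

theory Defs
  imports Complex_Main
begin

text \<open>Agents are indexed by V = {1..n}; a state is a function nat => real,
  of which only the values on {1..n} are relevant.\<close>

definition proj01 :: "real \<Rightarrow> real" where
  "proj01 y = min 1 (max 0 y)"

definition nbr :: "nat \<Rightarrow> (nat \<Rightarrow> real) \<Rightarrow> (nat \<Rightarrow> real) \<Rightarrow> nat \<Rightarrow> nat set" where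
  "nbr n r x i = {j \<in> {1..n}. \<bar>x j - x i\<bar> \<le> r i}"

definition xave :: "nat \<Rightarrow> (nat \<Rightarrow> real) \<Rightarrow> real" where
  "xave n x = (\<Sum>j = 1..n. x j) / real n"

definition stepC1 :: "nat \<Rightarrow> (nat \<Rightarrow> real) \<Rightarrow> (nat \<Rightarrow> real) \<Rightarrow> (nat \<Rightarrow> real) \<Rightarrow> (nat \<Rightarrow> real) \<Rightarrow> (nat \<Rightarrow> real)" where
  "stepC1 n r x u b = (\<lambda>i. proj01 ((\<Sum>j\<in>nbr n r x i. x j) / real (card (nbr n r x i)) + u i + b i))"

definition stepC3 :: "nat \<Rightarrow> (nat \<Rightarrow> real) \<Rightarrow> (nat \<Rightarrow> real) \<Rightarrow> (nat \<Rightarrow> real) \<Rightarrow> (nat \<Rightarrow> real) \<Rightarrow> (nat \<Rightarrow> real) \<Rightarrow> (nat \<Rightarrow> real)" where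
  "stepC3 n r \<omega> x u b = (\<lambda>i. proj01 (\<omega> i * xave n x
      + (1 - \<omega> i) / real (card (nbr n r x i)) * (\<Sum>j\<in>nbr n r x i. x j) + u i + b i))"

fun hist :: "((nat \<Rightarrow> real) \<Rightarrow> (nat \<Rightarrow> real) \<Rightarrow> (nat \<Rightarrow> real) \<Rightarrow> (nat \<Rightarrow> real))
    \<Rightarrow> (nat \<Rightarrow> real) \<Rightarrow> ((nat \<Rightarrow> real) list \<Rightarrow> nat \<Rightarrow> real) \<Rightarrow> (nat \<Rightarrow> nat \<Rightarrow> real)
    \<Rightarrow> nat \<Rightarrow> (nat \<Rightarrow> real) list" where
  "hist F x0 u b 0 = [x0]"
| "hist F x0 u b (Suc t) = (let h = hist F x0 u b t in h @ [F (last h) (u h) (b t)])"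

definition traj where
  "traj F x0 u b t = last (hist F x0 u b t)"

definition unit_cube :: "nat \<Rightarrow> (nat \<Rightarrow> real) set" where
  "unit_cube n = {x. \<forall>i\<in>{1..n}. 0 \<le> x i \<and> x i \<le> 1}"

text \<open>Finite-time robust reachability. delta and u are feedback laws depending on the
  history x(0..t); the admissibility constraints are required at every time t < T
  reached through admissible uncertainties.\<close>
definition robustly_reachable ::
  "nat \<Rightarrow> real \<Rightarrow> ((nat \<Rightarrow> real) \<Rightarrow> (nat \<Rightarrow> real) \<Rightarrow> (nat \<Rightarrow> real) \<Rightarrow> (nat \<Rightarrow> real))
    \<Rightarrow> (nat \<Rightarrow> real) set \<Rightarrow> bool" where
  "robustly_reachable n \<eta> F S \<longleftrightarrow>
    (\<exists>T::nat. T > 0 \<and> (\<exists>\<epsilon>'. 0 < \<epsilon>' \<and> \<epsilon>' < \<eta> \<and>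
      (\<forall>x0 \<in> unit_cube n. x0 \<in> S \<or>
        (\<exists>(\<delta> :: (nat \<Rightarrow> real) list \<Rightarrow> nat \<Rightarrow> real) (u :: (nat \<Rightarrow> real) list \<Rightarrow> nat \<Rightarrow> real).
          (\<forall>b t. t < T \<longrightarrow>
             (\<forall>s<t. \<forall>i\<in>{1..n}. \<bar>b s i\<bar> \<le> \<delta> (hist F x0 u b s) i) \<longrightarrow>
             (\<forall>i\<in>{1..n}. \<epsilon>' \<le> \<delta> (hist F x0 u b t) i \<and> \<delta> (hist F x0 u b t) i < \<eta> \<and>
                \<bar>u (hist F x0 u b t) i\<bar> \<le> \<eta> - \<delta> (hist F x0 u b t) i)) \<and>
          (\<forall>b. (\<forall>t<T. \<forall>i\<in>{1..n}. \<bar>b t i\<bar> \<le> \<delta> (hist F x0 u b t) i) \<longrightarrow>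
             (\<exists>t\<in>{1..T}. traj F x0 u b t \<in> S))))))"

definition Eset :: "nat \<Rightarrow> real \<Rightarrow> (nat \<Rightarrow> real) set" where
  "Eset n c = {x \<in> unit_cube n. Max {\<bar>x i - x j\<bar> | i j. i \<in> {1..n} \<and> j \<in> {1..n}} \<ge> c}"

end

theory Submission
  imports Defs
begin

lemma proj_range: "0 \<le> proj01 y \<and> proj01 y \<le> 1"
  unfolding proj01_def by auto

lemma proj_dist: "\<bar>proj01 y - 1/2\<bar> \<le> \<bar>y - 1/2\<bar>"
  unfolding proj01_def by (auto simp: min_def max_def abs_if)

lemma center_step:
  fixes a bb D P \<delta> :: real
  assumes "\<bar>a - 1/2\<bar> \<le> D" "\<bar>bb\<bar> \<le> \<delta>" "P - \<delta> > 0"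
  shows "\<bar>proj01 (a + max (-P) (min P (1/2 - a)) + bb) - 1/2\<bar> \<le> max (D - (P - \<delta>)) \<delta>"
proof -
  have "\<bar>(a + max (-P) (min P (1/2 - a)) + bb) - 1/2\<bar> \<le> max (D - (P - \<delta>)) \<delta>"
  proof (cases "1/2 - a \<ge> P")
    case True
    hence "max (-P) (min P (1/2 - a)) = P" using assms(2,3) by simp
    thus ?thesis using True assms by (simp add: abs_le_iff)
  next
    case False
    show ?thesis
    proof (cases "1/2 - a \<le> -P")
      case True
      hence "max (-P) (min P (1/2 - a)) = -P" using assms(2,3) by simp
      thus ?thesis using True assms by (simp add: abs_le_iff)
    next
      case False2: False
      hence "max (-P) (min P (1/2 - a)) = 1/2 - a" using False by simp
      thus ?thesis using assms by (simp add: abs_le_iff le_max_iff_disj)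
    qed
  qed
  thus ?thesis using proj_dist order_trans by blast
qed

lemma proj_mono: "y \<le> z \<Longrightarrow> proj01 y \<le> proj01 z"
  unfolding proj01_def by auto

lemma proj_sym: "(h::real) \<ge> 1/2 \<Longrightarrow> proj01 h - proj01 (1 - h) \<ge> min (2*h - 1) 1"
  unfolding proj01_def by (auto simp: min_def max_def)

lemma final_step:
  fixes a1 a2 b1 b2 P \<delta> :: real
  assumes "\<bar>a1 - 1/2\<bar> \<le> \<delta>" "\<bar>a2 - 1/2\<bar> \<le> \<delta>" "\<bar>b1\<bar> \<le> \<delta>" "\<bar>b2\<bar> \<le> \<delta>" "P - 2*\<delta> \<ge> 0"
  shows "min (2 * P - 4 * \<delta>) 1 \<le> proj01 (a1 + P + b1) - proj01 (a2 - P + b2)"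
proof -
  define h where "h = 1/2 + (P - 2*\<delta>)"
  have "proj01 h \<le> proj01 (a1 + P + b1)" using assms unfolding h_def
    by (intro proj_mono) (simp add: abs_le_iff)
  moreover have "proj01 (a2 - P + b2) \<le> proj01 (1 - h)" using assms unfolding h_def
    by (intro proj_mono) (simp add: abs_le_iff)
  moreover have "proj01 h - proj01 (1 - h) \<ge> min (2*h - 1) 1" using assms h_def by (intro proj_sym) simp
  moreover have "2*h - 1 = 2 * P - 4 * \<delta>" unfolding h_def by simp
  ultimately show ?thesis by linarith
qed

lemma avg_center:
  fixes x :: "nat \<Rightarrow> real"
  assumes "finite S" "S \<noteq> {}" "\<forall>j\<in>S. \<bar>x j - 1/2\<bar> \<le> D"
  shows "\<bar>(\<Sum>j\<in>S. x j) / real (card S) - 1/2\<bar> \<le> D"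
proof -
  have c: "real (card S) > 0" using assms by (simp add: card_gt_0_iff)
  have "(\<Sum>j\<in>S. x j) \<le> (\<Sum>j\<in>S. 1/2 + D)" using assms by (intro sum_mono) (auto simp: abs_le_iff)
  hence s1: "(\<Sum>j\<in>S. x j) \<le> real (card S) * (1/2 + D)" by simp
  have "(\<Sum>j\<in>S. 1/2 - D) \<le> (\<Sum>j\<in>S. x j)" using assms by (intro sum_mono) (auto simp: abs_le_iff)
  hence s0: "real (card S) * (1/2 - D) \<le> (\<Sum>j\<in>S. x j)" by simp
  have "(\<Sum>j\<in>S. x j) / real (card S) \<le> 1/2 + D" using s1 c by (simp add: divide_le_eq mult.commute)
  moreover have "1/2 - D \<le> (\<Sum>j\<in>S. x j) / real (card S)" using s0 c by (simp add: le_divide_eq mult.commute)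
  ultimately show ?thesis by (simp add: abs_le_iff)
qed

lemma conv_center:
  fixes w a c D :: real
  assumes "0 \<le> w" "w \<le> 1" "\<bar>a - 1/2\<bar> \<le> D" "\<bar>c - 1/2\<bar> \<le> D"
  shows "\<bar>w * a + (1 - w) * c - 1/2\<bar> \<le> D"
proof -
  have e: "w * a + (1 - w) * c - 1/2 = w * (a - 1/2) + (1 - w) * (c - 1/2)" by (simp add: field_simps)
  have "\<bar>w * (a - 1/2)\<bar> \<le> w * D" using assms by (simp add: abs_mult mult_left_mono)
  moreover have "\<bar>(1 - w) * (c - 1/2)\<bar> \<le> (1 - w) * D" using assms by (simp add: abs_mult mult_left_mono)
  ultimately have "\<bar>w * (a - 1/2) + (1 - w) * (c - 1/2)\<bar> \<le> w * D + (1 - w) * D"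
    using abs_triangle_ineq[of "w * (a - 1/2)" "(1 - w) * (c - 1/2)"] by linarith
  moreover have "w * D + (1 - w) * D = D" by (simp add: left_diff_distrib)
  ultimately show ?thesis unfolding e by simp
qed

lemma nbr_props:
  assumes "i \<in> {1..n}" "r i > 0"
  shows "finite (nbr n r x i) \<and> nbr n r x i \<noteq> {} \<and> nbr n r x i \<subseteq> {1..n}"
  using assms unfolding nbr_def by auto

lemma hist_len: "length (hist F x0 u b t) = Suc t"
  by (induction t) (simp_all add: Let_def)

lemma traj_0: "traj F x0 u b 0 = x0"
  by (simp add: traj_def)

lemma traj_Suc: "traj F x0 u b (Suc t) = F (traj F x0 u b t) (u (hist F x0 u b t)) (b t)"
  by (simp add: traj_def Let_def)

lemma generic:
  fixes F :: "(nat \<Rightarrow> real) \<Rightarrow> (nat \<Rightarrow> real) \<Rightarrow> (nat \<Rightarrow> real) \<Rightarrow> (nat \<Rightarrow> real)"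
    and A :: "(nat \<Rightarrow> real) \<Rightarrow> nat \<Rightarrow> real"
  assumes n2: "n \<ge> 2" and pos: "0 < \<epsilon>" "\<epsilon> < \<eta>"
    and Fform: "\<And>x u b. F x u b = (\<lambda>i. proj01 (A x i + u i + b i))"
    and Acen: "\<And>x D i. \<forall>j\<in>{1..n}. \<bar>x j - 1/2\<bar> \<le> D \<Longrightarrow> i \<in> {1..n} \<Longrightarrow> \<bar>A x i - 1/2\<bar> \<le> D"
  shows "robustly_reachable n \<eta> F (Eset n (min (2*\<eta> - 2*\<epsilon>) 1))"
proof -
  define \<delta> :: real where "\<delta> = min \<epsilon> 1 / 4"
  define P where "P = \<eta> - \<delta>"
  define s where "s = P - \<delta>"
  define K where "K = nat \<lceil>1 / (2*s)\<rceil>"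
  have d0: "0 < \<delta>" "\<delta> \<le> \<epsilon>/4" using pos unfolding \<delta>_def by auto
  have s0: "s > 0" using d0 pos unfolding s_def P_def by simp
  have P0: "P \<ge> 0" using s0 d0 unfolding s_def by simp
  have "real K \<ge> 1 / (2*s)" unfolding K_def by (rule real_nat_ceiling_ge)
  hence "real K * s \<ge> 1/(2*s) * s" using s0 by (intro mult_right_mono) auto
  hence Ks: "real K * s \<ge> 1/2" using s0 by simp
  define u :: "(nat \<Rightarrow> real) list \<Rightarrow> nat \<Rightarrow> real" where
    "u = (\<lambda>h i. if length h - 1 < K then max (-P) (min P (1/2 - A (last h) i))
              else if i = 1 then P else if i = 2 then -P else 0)"
  define \<delta>f :: "(nat \<Rightarrow> real) list \<Rightarrow> nat \<Rightarrow> real" where "\<delta>f = (\<lambda>h i. \<delta>)"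
  have ub: "\<bar>u h i\<bar> \<le> P" for h i using P0 unfolding u_def by (auto simp: abs_le_iff)
  show ?thesis unfolding robustly_reachable_def
  proof (intro exI[of _ "Suc K"] conjI exI[of _ "\<delta>"] ballI)
    show "0 < Suc K" by simp
    show "0 < \<delta>" "\<delta> < \<eta>" using d0 pos by auto
    fix x0 assume x0: "x0 \<in> unit_cube n"
    have P1: "\<forall>b t. t < Suc K \<longrightarrow>
             (\<forall>s<t. \<forall>i\<in>{1..n}. \<bar>b s i\<bar> \<le> \<delta>f (hist F x0 u b s) i) \<longrightarrow>
             (\<forall>i\<in>{1..n}. \<delta> \<le> \<delta>f (hist F x0 u b t) i \<and> \<delta>f (hist F x0 u b t) i < \<eta> \<and>
                \<bar>u (hist F x0 u b t) i\<bar> \<le> \<eta> - \<delta>f (hist F x0 u b t) i)"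
      using d0 pos ub unfolding \<delta>f_def P_def by auto
    have P2: "\<forall>b. (\<forall>t<Suc K. \<forall>i\<in>{1..n}. \<bar>b t i\<bar> \<le> \<delta>f (hist F x0 u b t) i) \<longrightarrow>
             (\<exists>t\<in>{1..Suc K}. traj F x0 u b t \<in> Eset n (min (2*\<eta> - 2*\<epsilon>) 1))"
    proof (intro allI impI)
      fix b :: "nat \<Rightarrow> nat \<Rightarrow> real"
      assume "\<forall>t<Suc K. \<forall>i\<in>{1..n}. \<bar>b t i\<bar> \<le> \<delta>f (hist F x0 u b t) i"
      hence bb: "\<And>t i. t < Suc K \<Longrightarrow> i \<in> {1..n} \<Longrightarrow> \<bar>b t i\<bar> \<le> \<delta>" unfolding \<delta>f_def by auto
      have ul: "u (hist F x0 u b t) = (\<lambda>i. if t < K then max (-P) (min P (1/2 - A (traj F x0 u b t) i))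
              else if i = 1 then P else if i = 2 then -P else 0)" for t
        unfolding u_def hist_len traj_def by simp
      have inv: "t \<le> K \<Longrightarrow> \<forall>j\<in>{1..n}. \<bar>traj F x0 u b t j - 1/2\<bar> \<le> max (1/2 - real t * s) \<delta>" for t
      proof (induction t)
        case 0
        then show ?case using x0 unfolding unit_cube_def traj_0 by (auto simp: abs_le_iff)
      next
        case (Suc t)
        hence IH: "\<forall>j\<in>{1..n}. \<bar>traj F x0 u b t j - 1/2\<bar> \<le> max (1/2 - real t * s) \<delta>" and tK: "t < K"
          by auto
        have mx: "max (max (1/2 - real t * s) \<delta> - s) \<delta> \<le> max (1/2 - real (Suc t) * s) \<delta>"
          using s0 by (auto simp: max_def algebra_simps)
        show ?case
        proof
          fix j assume j: "j \<in> {1..n}"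
          have eq: "traj F x0 u b (Suc t) j = proj01 (A (traj F x0 u b t) j
              + max (-P) (min P (1/2 - A (traj F x0 u b t) j)) + b t j)"
            unfolding traj_Suc Fform ul using tK by simp
          have st: "\<bar>proj01 (A (traj F x0 u b t) j
              + max (-P) (min P (1/2 - A (traj F x0 u b t) j)) + b t j) - 1/2\<bar>
              \<le> max (max (1/2 - real t * s) \<delta> - s) \<delta>"
            unfolding s_def apply (rule center_step)
            using Acen[OF IH j] bb[of t j] tK j s0 unfolding s_def by auto
          show "\<bar>traj F x0 u b (Suc t) j - 1/2\<bar> \<le> max (1/2 - real (Suc t) * s) \<delta>"
            unfolding eq using order_trans[OF st mx] .
        qed
      qed
      have xK: "\<forall>j\<in>{1..n}. \<bar>traj F x0 u b K j - 1/2\<bar> \<le> \<delta>"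
      proof
        fix j assume "j \<in> {1..n}"
        hence "\<bar>traj F x0 u b K j - 1/2\<bar> \<le> max (1/2 - real K * s) \<delta>" using inv by blast
        also have "\<dots> = \<delta>" using Ks d0 by simp
        finally show "\<bar>traj F x0 u b K j - 1/2\<bar> \<le> \<delta>" .
      qed
      define y where "y = traj F x0 u b (Suc K)"
      have y: "y = (\<lambda>i. proj01 (A (traj F x0 u b K) i + (if i = 1 then P else if i = 2 then -P else 0) + b K i))"
        unfolding y_def traj_Suc Fform ul by simp
      have i12: "(1::nat) \<in> {1..n}" "(2::nat) \<in> {1..n}" using n2 by auto
      have gap0: "y 1 - y 2 \<ge> min (2*(P - 2*\<delta>)) 1"
        unfolding y apply simp
        apply (rule final_step)
        using Acen[OF xK i12(1)] Acen[OF xK i12(2)] bb[OF _ i12(1), of K] bb[OF _ i12(2), of K]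
          d0 pos unfolding P_def by auto
      have "min (2*\<eta> - 2*\<epsilon>) 1 \<le> min (2*(P - 2*\<delta>)) 1" using d0 unfolding P_def by auto
      hence gap: "y 1 - y 2 \<ge> min (2*\<eta> - 2*\<epsilon>) 1" using gap0 by linarith
      have cube: "y \<in> unit_cube n" unfolding unit_cube_def y using proj_range by auto
      define M where "M = {\<bar>y i - y j\<bar> | i j. i \<in> {1..n} \<and> j \<in> {1..n}}"
      have "M = (\<lambda>(i,j). \<bar>y i - y j\<bar>) ` ({1..n} \<times> {1..n})" unfolding M_def by force
      hence fM: "finite M" by simp
      have "\<bar>y 1 - y 2\<bar> \<in> M" unfolding M_def using i12 by blast
      hence "\<bar>y 1 - y 2\<bar> \<le> Max M" using fM by simp
      hence "Max M \<ge> min (2*\<eta> - 2*\<epsilon>) 1" using gap by simp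
      hence "y \<in> Eset n (min (2*\<eta> - 2*\<epsilon>) 1)" unfolding Eset_def using cube M_def by simp
      thus "\<exists>t\<in>{1..Suc K}. traj F x0 u b t \<in> Eset n (min (2*\<eta> - 2*\<epsilon>) 1)" using y_def by auto
    qed
    show "x0 \<in> Eset n (min (2*\<eta> - 2*\<epsilon>) 1) \<or>
        (\<exists>(\<delta>' :: (nat \<Rightarrow> real) list \<Rightarrow> nat \<Rightarrow> real) (u :: (nat \<Rightarrow> real) list \<Rightarrow> nat \<Rightarrow> real).
          (\<forall>b t. t < Suc K \<longrightarrow>
             (\<forall>s<t. \<forall>i\<in>{1..n}. \<bar>b s i\<bar> \<le> \<delta>' (hist F x0 u b s) i) \<longrightarrow>
             (\<forall>i\<in>{1..n}. \<delta> \<le> \<delta>' (hist F x0 u b t) i \<and> \<delta>' (hist F x0 u b t) i < \<eta> \<and>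
                \<bar>u (hist F x0 u b t) i\<bar> \<le> \<eta> - \<delta>' (hist F x0 u b t) i)) \<and>
          (\<forall>b. (\<forall>t<Suc K. \<forall>i\<in>{1..n}. \<bar>b t i\<bar> \<le> \<delta>' (hist F x0 u b t) i) \<longrightarrow>
             (\<exists>t\<in>{1..Suc K}. traj F x0 u b t \<in> Eset n (min (2*\<eta> - 2*\<epsilon>) 1))))"
      using P1 P2 by blast
  qed
qed

theorem lemma4:
  fixes n :: nat and r \<omega> :: "nat \<Rightarrow> real" and \<eta> \<epsilon> :: real
  assumes "n \<ge> 3"
    and "\<forall>i\<in>{1..n}. 0 < r i \<and> r i \<le> 1"
    and "\<forall>i\<in>{1..n}. 0 < \<omega> i \<and> \<omega> i < 1"
    and "\<eta> > 0"
    and "0 < \<epsilon>" and "\<epsilon> < \<eta>"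
  shows "robustly_reachable n \<eta> (stepC1 n r) (Eset n (min (2*\<eta> - 2*\<epsilon>) 1))
       \<and> robustly_reachable n \<eta> (stepC3 n r \<omega>) (Eset n (min (2*\<eta> - 2*\<epsilon>) 1))"
proof
  have avgN: "\<bar>(\<Sum>j\<in>nbr n r x i. x j) / real (card (nbr n r x i)) - 1/2\<bar> \<le> D"
    if "\<forall>j\<in>{1..n}. \<bar>x j - 1/2\<bar> \<le> D" "i \<in> {1..n}" for x :: "nat \<Rightarrow> real" and i D
  proof -
    have "finite (nbr n r x i) \<and> nbr n r x i \<noteq> {} \<and> nbr n r x i \<subseteq> {1..n}"
      using nbr_props[of i n r x] that assms(2) by auto
    thus ?thesis using that by (intro avg_center) auto
  qed
  show "robustly_reachable n \<eta> (stepC1 n r) (Eset n (min (2*\<eta> - 2*\<epsilon>) 1))"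
    apply (rule generic[where A = "\<lambda>x i. (\<Sum>j\<in>nbr n r x i. x j) / real (card (nbr n r x i))"])
    using assms avgN by (auto simp: stepC1_def)
  have aveB: "\<bar>xave n x - 1/2\<bar> \<le> D" if "\<forall>j\<in>{1..n}. \<bar>x j - 1/2\<bar> \<le> D" for x :: "nat \<Rightarrow> real" and D
  proof -
    have "{1..n} \<noteq> {}" using assms by auto
    hence "\<bar>(\<Sum>j\<in>{1..n}. x j) / real (card {1..n}) - 1/2\<bar> \<le> D"
      using that by (intro avg_center) auto
    thus ?thesis unfolding xave_def by simp
  qed
  show "robustly_reachable n \<eta> (stepC3 n r \<omega>) (Eset n (min (2*\<eta> - 2*\<epsilon>) 1))"
  proof (rule generic[where A = "\<lambda>x i. \<omega> i * xave n x + (1 - \<omega> i) / real (card (nbr n r x i)) * (\<Sum>j\<in>nbr n r x i. x j)"])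
    show "n \<ge> 2" "0 < \<epsilon>" "\<epsilon> < \<eta>" using assms by auto
    show "\<And>x u b. stepC3 n r \<omega> x u b = (\<lambda>i. proj01 (\<omega> i * xave n x + (1 - \<omega> i) / real (card (nbr n r x i)) * (\<Sum>j\<in>nbr n r x i. x j) + u i + b i))"
      by (simp add: stepC3_def)
    fix x :: "nat \<Rightarrow> real" and D i assume x: "\<forall>j\<in>{1..n}. \<bar>x j - 1/2\<bar> \<le> D" and i: "i \<in> {1..n}"
    have e: "(1 - \<omega> i) / real (card (nbr n r x i)) * (\<Sum>j\<in>nbr n r x i. x j)
        = (1 - \<omega> i) * ((\<Sum>j\<in>nbr n r x i. x j) / real (card (nbr n r x i)))" by simp
    show "\<bar>\<omega> i * xave n x + (1 - \<omega> i) / real (card (nbr n r x i)) * (\<Sum>j\<in>nbr n r x i. x j) - 1/2\<bar> \<le> D"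
    proof -
      have w: "0 \<le> \<omega> i" "\<omega> i \<le> 1" using assms(3) i by force+
      show ?thesis unfolding e using w by (intro conv_center aveB[OF x] avgN[OF x i])
    qed
  qed
qed

end
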